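(* Let $\mathcal X$ and $\mathcal Y$ be Banach spaces, let $A$ be a closed, densely defined linear operator from $\operatorname{dom}A\subset\mathcal X$ to $\mathcal Y$, and let $B$ be a closed, densely defined linear operator from $\operatorname{dom}B\subset\mathcal Y$ to $\mathcal X$. Assume that $\rho(AB)\neq\emptyset$ and $\rho(BA)\neq\emptyset$. Then $$\sigma(AB)\setminus\{0\}=\sigma(BA)\setminus\{0\}.$$ Moreover, for $\lambda\in\rho(AB)\setminus\{0\}$ and $\mu\in\rho(BA)$, $$(BA-\lambda)^{-1}=\lambda^{-1}\big[\overline{B(AB-\lambda)^{-1}A}-I\big]=\lambda^{-1}\big(\mu+(\lambda-\mu)B(AB-\lambda)^{-1}A\big)(BA-\mu)^{-1},$$ where the bar denotes the closure of the (densely defined, bounded) operator $B(AB-\lambda)^{-1}A$ defined on $\operatorname{dom}A$. Consequently, there exists a constant $C>0$ depending only on $A$ and $B$ such that for all $\lambda,\mu\in\rho(BA)$ with $\lambda\neq0$, $$\|(BA-\lambda)^{-1}\|\le\frac{C\,M_1(\lambda)M_2(\mu)}{|\lambda|}\Big(|\mu|+|\lambda-\mu|\,(2+|\lambda|)(2+|\mu|)\Big),$$ where $M_1(\lambda):=\max\{1,\|(AB-\lambda)^{-1}\|\}$ and $M_2(\mu):=\max\{1,\|(BA-\mu)^{-1}\|\}$.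
   Context: Products have natural domains: $\operatorname{dom}(AB)=\{y\in\operatorname{dom}B: By\in\operatorname{dom}A\}$, $\operatorname{dom}(BA)=\{x\in\operatorname{dom}A: Ax\in\operatorname{dom}B\}$. For a linear operator $S$ in a Banach space $\mathcal Z$, the resolvent set $\rho(S)$ is the set of $\lambda\in\mathbb C$ such that $S-\lambda:\operatorname{dom}S\to\mathcal Z$ is bijective with bounded inverse $(S-\lambda)^{-1}\in L(\mathcal Z)$; $\sigma(S)=\mathbb C\setminus\rho(S)$. (In particular, $\lambda\in\rho(BA)\setminus\{0\}$ implies $\lambda\in\rho(AB)$ by the first assertion, so $M_1(\lambda)$ is defined.) *)

theory Defs
  imports "HOL-Analysis.Analysis"
begin

class complex_vector = real_vector +
  fixes cscale :: "complex \<Rightarrow> 'a \<Rightarrow> 'a"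
  assumes cscale_add_right: "cscale a (x + y) = cscale a x + cscale a y"
    and cscale_add_left: "cscale (a + b) x = cscale a x + cscale b x"
    and cscale_cscale: "cscale a (cscale b x) = cscale (a * b) x"
    and cscale_one: "cscale 1 x = x"
    and scaleR_cscale: "scaleR r x = cscale (complex_of_real r) x"

class complex_normed_vector = complex_vector + real_normed_vector +
  assumes norm_cscale: "norm (cscale a x) = cmod a * norm x"

class cbanach = complex_normed_vector + complete_space

instantiation complex :: complex_vector
begin
definition cscale_complex :: "complex \<Rightarrow> complex \<Rightarrow> complex" where
  "cscale_complex a x = a * x"
instance by standard (auto simp: cscale_complex_def algebra_simps scaleR_conv_of_real)
end

instance complex :: complex_normed_vector
  by standard (simp add: cscale_complex_def norm_mult)

instance complex :: cbanach ..

section \<open>Unbounded linear operators, given by a domain D and a map f on it\<close>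

definition csubspace :: "'a::complex_vector set \<Rightarrow> bool" where
  "csubspace S \<longleftrightarrow> 0 \<in> S \<and> (\<forall>x\<in>S. \<forall>y\<in>S. x + y \<in> S) \<and> (\<forall>c. \<forall>x\<in>S. cscale c x \<in> S)"

definition lin_op :: "'a::complex_vector set \<Rightarrow> ('a \<Rightarrow> 'b::complex_vector) \<Rightarrow> bool" where
  "lin_op D f \<longleftrightarrow> csubspace D \<and> (\<forall>x\<in>D. \<forall>y\<in>D. f (x + y) = f x + f y)
      \<and> (\<forall>c. \<forall>x\<in>D. f (cscale c x) = cscale c (f x))"

definition graph :: "'a set \<Rightarrow> ('a \<Rightarrow> 'b) \<Rightarrow> ('a \<times> 'b) set" where
  "graph D f = {(x, f x) | x. x \<in> D}"

definition closed_op :: "'a::complex_normed_vector set \<Rightarrow> ('a \<Rightarrow> 'b::complex_normed_vector) \<Rightarrow> bool" where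
  "closed_op D f \<longleftrightarrow> closed (graph D f)"

definition densely_defined :: "'a::complex_normed_vector set \<Rightarrow> bool" where
  "densely_defined D \<longleftrightarrow> closure D = UNIV"

definition prod_dom :: "'b set \<Rightarrow> 'a set \<Rightarrow> ('a \<Rightarrow> 'b) \<Rightarrow> 'a set" where
  "prod_dom DA DB fB = {y \<in> DB. fB y \<in> DA}"

definition cbounded_linear :: "('a::complex_normed_vector \<Rightarrow> 'b::complex_normed_vector) \<Rightarrow> bool" where
  "cbounded_linear R \<longleftrightarrow> bounded_linear R \<and> (\<forall>c x. R (cscale c x) = cscale c (R x))"

definition resolvent_set :: "'a::complex_normed_vector set \<Rightarrow> ('a \<Rightarrow> 'a) \<Rightarrow> complex set" where
  "resolvent_set D S = {l. bij_betw (\<lambda>x. S x - cscale l x) D UNIV \<and>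
      (\<exists>R. cbounded_linear R \<and> (\<forall>z. R z \<in> D \<and> S (R z) - cscale l (R z) = z))}"

definition spectrum_op :: "'a::complex_normed_vector set \<Rightarrow> ('a \<Rightarrow> 'a) \<Rightarrow> complex set" where
  "spectrum_op D S = UNIV - resolvent_set D S"

definition resolvent :: "'a::complex_normed_vector set \<Rightarrow> ('a \<Rightarrow> 'a) \<Rightarrow> complex \<Rightarrow> 'a \<Rightarrow> 'a" where
  "resolvent D S l z = (THE x. x \<in> D \<and> S x - cscale l x = z)"

text \<open>Closure of an operator: the operator whose graph is the closure of the graph.\<close>
definition is_graph :: "('a \<times> 'b) set \<Rightarrow> bool" where
  "is_graph G \<longleftrightarrow> (\<forall>x y z. (x, y) \<in> G \<and> (x, z) \<in> G \<longrightarrow> y = z)"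

definition closable :: "'a::complex_normed_vector set \<Rightarrow> ('a \<Rightarrow> 'b::complex_normed_vector) \<Rightarrow> bool" where
  "closable D f \<longleftrightarrow> is_graph (closure (graph D f))"

definition cl_dom :: "'a::complex_normed_vector set \<Rightarrow> ('a \<Rightarrow> 'b::complex_normed_vector) \<Rightarrow> 'a set" where
  "cl_dom D f = fst ` closure (graph D f)"

definition cl_fun :: "'a::complex_normed_vector set \<Rightarrow> ('a \<Rightarrow> 'b::complex_normed_vector) \<Rightarrow> 'a \<Rightarrow> 'b" where
  "cl_fun D f x = (THE y. (x, y) \<in> closure (graph D f))"

end

theory Submission
  imports Defs
begin


instance cbanach \<subseteq> banach ..

lemma closed_graph_thm:
  fixes T :: "'a::banach \<Rightarrow> 'b::banach"
  assumes add: "\<And>x y. T (x + y) = T x + T y" and sc: "\<And>r x. T (r *\<^sub>R x) = r *\<^sub>R T x"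
    and cl: "closed (range (\<lambda>x. (x, T x)))"
  shows "bounded_linear T"
proof -
  have lin: "linear T" using add sc by (simp add: linearI)
  have T0: "T 0 = 0" using linear_0[OF lin] .
  define K where "K n = {x. norm (T x) \<le> real n}" for n :: nat
  have cover: "(\<Union>n. closure (K n)) = UNIV"
  proof -
    have "x \<in> K (nat \<lceil>norm (T x)\<rceil>)" for x
      unfolding K_def by simp
    then show ?thesis using closure_subset by blast
  qed
  have "\<exists>n. interior (closure (K n)) \<noteq> {}"
  proof (rule ccontr)
    assume "\<not> ?thesis"
    then have hS: "\<And>S. S \<in> range (\<lambda>n. closure (K n)) \<Longrightarrow> closedin Met_TC.mtopology S \<and> Met_TC.mtopology interior_of S = {}"
      by auto
    have "Met_TC.mtopology interior_of (\<Union>(range (\<lambda>n. closure (K n)))) = {}"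
      by (rule Met_TC.metric_Baire_category_alt) (use hS complete_UNIV in auto)
    then show False using cover by simp
  qed
  then obtain n x0 where "x0 \<in> interior (closure (K n))" by blast
  then obtain r where r: "r > 0" "ball x0 r \<subseteq> closure (K n)" using mem_interior by blast
  have small: "x \<in> closure (K n)" if "norm x < r" for x
  proof (unfold closure_approachable, intro allI impI)
    fix e :: real assume e: "e > 0"
    have "x0 + x \<in> closure (K n)" "x0 - x \<in> closure (K n)"
      using r that by (auto simp: dist_norm intro!: subsetD[OF r(2)])
    then obtain a b where ab: "a \<in> K n" "dist a (x0 + x) < e" "b \<in> K n" "dist b (x0 - x) < e"
      using e unfolding closure_approachable by metis
    define y where "y = (1/2) *\<^sub>R (a - b)"
    have "T y = (1/2) *\<^sub>R (T a - T b)" unfolding y_def using lin by (simp add: linear_scale linear_diff)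
    then have "norm (T y) \<le> (1/2) * (norm (T a) + norm (T b))"
      by (simp add: norm_triangle_ineq4)
    also have "\<dots> \<le> real n" using ab unfolding K_def by simp
    finally have "y \<in> K n" unfolding K_def by simp
    moreover have "dist y x < e"
    proof -
      have "y - x = (1/2) *\<^sub>R ((a - (x0 + x)) - (b - (x0 - x)))"
        unfolding y_def by (simp add: algebra_simps) (metis scaleR_add_left field_sum_of_halves scaleR_one)
      then have "norm (y - x) = (1/2) * norm ((a - (x0 + x)) - (b - (x0 - x)))" by (simp only: norm_scaleR)
      also have "\<dots> \<le> (1/2) * (norm (a - (x0 + x)) + norm (b - (x0 - x)))"
        by (intro mult_left_mono norm_triangle_ineq4) auto
      finally have "norm (y - x) \<le> (1/2) * (norm (a - (x0 + x)) + norm (b - (x0 - x)))" .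
      then show ?thesis using ab by (simp add: dist_norm)
    qed
    ultimately show "\<exists>y\<in>K n. dist y x < e" by blast
  qed
  define c where "c = 2 * real n / r"
  have c0: "c \<ge> 0" using r by (simp add: c_def)
  have approx: "\<exists>z. norm (x - z) \<le> e \<and> norm (T z) \<le> c * norm x" if e: "e > 0" for x e
  proof (cases "x = 0")
    case True then show ?thesis using e T0 by (intro exI[of _ 0]) auto
  next
    case False
    define t where "t = 2 * norm x / r"
    have t: "t > 0" using False r by (simp add: t_def)
    have "norm ((1/t) *\<^sub>R x) < r" using r t False by (simp add: t_def)
    then have "(1/t) *\<^sub>R x \<in> closure (K n)" by (rule small)
    then obtain w where w: "w \<in> K n" "dist w ((1/t) *\<^sub>R x) < e / t"
      using e t unfolding closure_approachable by (meson divide_pos_pos)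
    have "x - t *\<^sub>R w = t *\<^sub>R ((1/t) *\<^sub>R x - w)" using t by (simp add: algebra_simps)
    then have "norm (x - t *\<^sub>R w) = t * dist w ((1/t) *\<^sub>R x)"
      using t by (simp add: dist_norm norm_minus_commute)
    also have "\<dots> \<le> e" using w t by (simp add: field_simps)
    finally have 1: "norm (x - t *\<^sub>R w) \<le> e" .
    have "norm (T (t *\<^sub>R w)) = t * norm (T w)" using t sc by simp
    also have "\<dots> \<le> t * real n" using w t unfolding K_def by simp
    also have "\<dots> = c * norm x" using r by (simp add: t_def c_def field_simps)
    finally show ?thesis using 1 by blast
  qed
  define Z where "Z x e = (SOME z. norm (x - z) \<le> e \<and> norm (T z) \<le> c * norm x)" for x e
  have Z: "\<And>x e. e > 0 \<Longrightarrow> norm (x - Z x e) \<le> e \<and> norm (T (Z x e)) \<le> c * norm x"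
    unfolding Z_def by (rule someI_ex) (rule approx)
  have bound: "norm (T x) \<le> norm x * (2 * c)" for x
  proof (cases "x = 0")
    case True then show ?thesis using T0 by simp
  next
    case False
    then have nx: "norm x > 0" by simp
    define res where "res = rec_nat x (\<lambda>k v. v - Z v (norm x / 2 ^ Suc k))"
    have res0: "res 0 = x" and resS: "res (Suc k) = res k - Z (res k) (norm x / 2 ^ Suc k)" for k
      by (simp_all add: res_def)
    define z where "z k = Z (res k) (norm x / 2 ^ Suc k)" for k
    have nres: "norm (res k) \<le> norm x / 2 ^ k" for k
    proof (cases k)
      case 0 then show ?thesis by (simp add: res0)
    next
      case (Suc j)
      have "norm (res k) = norm (res j - Z (res j) (norm x / 2 ^ Suc j))" using Suc resS by simp
      also have "\<dots> \<le> norm x / 2 ^ Suc j" using Z nx by simp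
      finally show ?thesis using Suc by simp
    qed
    have nTz: "norm (T (z k)) \<le> c * norm x * (1/2) ^ k" for k
    proof -
      have "norm (T (z k)) \<le> c * norm (res k)" unfolding z_def using Z nx by simp
      also have "\<dots> \<le> c * (norm x / 2 ^ k)" using mult_left_mono[OF nres c0] by simp
      finally show ?thesis by (simp add: power_one_over)
    qed
    have psum: "(\<Sum>j<k. z j) = x - res k" for k
      by (induction k) (simp_all add: res0 resS z_def)
    have "res \<longlonglongrightarrow> 0"
    proof (rule tendsto_norm_zero_cancel, rule Lim_null_comparison)
      show "\<forall>\<^sub>F k in sequentially. norm (norm (res k)) \<le> norm x * (1/2) ^ k"
        using nres by (simp add: power_one_over)
      show "(\<lambda>k. norm x * (1 / 2) ^ k) \<longlonglongrightarrow> 0"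
        by (intro tendsto_mult_right_zero LIMSEQ_power_zero) simp
    qed
    then have sx: "(\<lambda>k. \<Sum>j<k. z j) \<longlonglongrightarrow> x"
      unfolding psum using tendsto_diff[OF tendsto_const \<open>res \<longlonglongrightarrow> 0\<close>, of x] by simp
    have sg: "summable (\<lambda>k. c * norm x * (1/2::real) ^ k)"
      by (intro summable_mult summable_geometric) simp
    have sn: "summable (\<lambda>k. norm (T (z k)))"
      by (rule summable_comparison_test[OF _ sg]) (use nTz in simp)
    have s: "summable (\<lambda>k. T (z k))" by (rule summable_norm_cancel[OF sn])
    define y where "y = (\<Sum>k. T (z k))"
    have ny: "norm y \<le> 2 * c * norm x"
    proof -
      have "norm y \<le> (\<Sum>k. norm (T (z k)))" unfolding y_def by (rule summable_norm[OF sn])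
      also have "\<dots> \<le> (\<Sum>k. c * norm x * (1/2::real) ^ k)"
        by (rule suminf_le[OF _ sn sg]) (use nTz in simp)
      also have "\<dots> = c * norm x * 2"
        using suminf_geometric[of "1/2::real"] by (simp add: suminf_mult)
      finally show ?thesis by simp
    qed
    have sy: "(\<lambda>k. T (\<Sum>j<k. z j)) \<longlonglongrightarrow> y"
      using summable_LIMSEQ[OF s] unfolding y_def by (simp add: linear_sum[OF lin])
    have "(x, y) \<in> range (\<lambda>x. (x, T x))"
      using cl unfolding closed_sequential_limits
      by (erule_tac x="\<lambda>k. ((\<Sum>j<k. z j), T (\<Sum>j<k. z j))" in allE, erule_tac x="(x,y)" in allE)
         (auto intro: tendsto_Pair[OF sx sy])
    then have "y = T x" by auto
    then show ?thesis using ny by (simp add: mult.commute mult.left_commute)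
  qed
  show ?thesis by (rule bounded_linear_intro[OF add sc bound])
qed




lemma cscale_zero_left[simp]: "cscale 0 (x::'a::complex_vector) = 0"
  using scaleR_cscale[of 0 x] by simp
lemma cscale_zero_right[simp]: "cscale a (0::'a::complex_vector) = 0"
  by (metis cscale_zero_left cscale_cscale mult_zero_right)
lemma cscale_minus_right: "cscale a (- (x::'a::complex_vector)) = - cscale a x"
proof -
  have "cscale a x + cscale a (-x) = 0" using cscale_add_right[of a x "-x", symmetric] by simp
  then show ?thesis by (metis add.commute add_eq_0_iff2 minus_unique)
qed
lemma cscale_diff_right: "cscale a ((x::'a::complex_vector) - y) = cscale a x - cscale a y"
  by (metis diff_conv_add_uminus cscale_add_right cscale_minus_right)
lemma cscale_minus_left: "cscale (-a) (x::'a::complex_vector) = - cscale a x"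
proof -
  have "cscale a x + cscale (-a) x = 0" using cscale_add_left[of a "-a" x, symmetric] by simp
  then show ?thesis by (metis add.commute add_eq_0_iff2 minus_unique)
qed
lemma cscale_diff_left: "cscale (a - b) (x::'a::complex_vector) = cscale a x - cscale b x"
  by (metis diff_conv_add_uminus cscale_add_left cscale_minus_left)
lemma cscale_neg1: "cscale (-1) (x::'a::complex_vector) = - x"
  by (simp add: cscale_minus_left cscale_one)
lemma cscale_comm: "cscale a (cscale b (x::'a::complex_vector)) = cscale b (cscale a x)"
  by (simp add: cscale_cscale mult.commute)
lemma cscale_inv: "l \<noteq> 0 \<Longrightarrow> cscale (inverse l) (cscale l (x::'a::complex_vector)) = x"
  by (simp add: cscale_cscale cscale_one)
lemma cscale_inv': "l \<noteq> 0 \<Longrightarrow> cscale l (cscale (inverse l) (x::'a::complex_vector)) = x"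
  by (simp add: cscale_cscale cscale_one)
lemma cscale_of_real: "cscale (complex_of_real r) (x::'a::complex_vector) = r *\<^sub>R x"
  by (simp add: scaleR_cscale)

lemma norm_cscale': "norm (cscale a (x::'a::complex_normed_vector)) = cmod a * norm x"
  by (rule norm_cscale)

lemma csub_zero: "csubspace D \<Longrightarrow> 0 \<in> D" by (simp add: csubspace_def)
lemma csub_add: "csubspace D \<Longrightarrow> x \<in> D \<Longrightarrow> y \<in> D \<Longrightarrow> x + y \<in> D" by (simp add: csubspace_def)
lemma csub_scale: "csubspace D \<Longrightarrow> x \<in> D \<Longrightarrow> cscale c x \<in> D" by (simp add: csubspace_def)
lemma csub_diff: "csubspace D \<Longrightarrow> x \<in> D \<Longrightarrow> y \<in> D \<Longrightarrow> x - y \<in> D"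
  using csub_add[of D x "cscale (-1) y"] csub_scale[of D y "-1"] by (simp add: cscale_neg1)

lemma lin_sub: "lin_op D f \<Longrightarrow> csubspace D" by (simp add: lin_op_def)
lemma lin_add: "lin_op D f \<Longrightarrow> x \<in> D \<Longrightarrow> y \<in> D \<Longrightarrow> f (x + y) = f x + f y" by (simp add: lin_op_def)
lemma lin_scale: "lin_op D f \<Longrightarrow> x \<in> D \<Longrightarrow> f (cscale c x) = cscale c (f x)" by (simp add: lin_op_def)
lemma lin_zero: "lin_op D f \<Longrightarrow> f 0 = 0"
  using lin_scale[of D f 0 0] csub_zero[OF lin_sub] by force
lemma lin_diff: "lin_op D f \<Longrightarrow> x \<in> D \<Longrightarrow> y \<in> D \<Longrightarrow> f (x - y) = f x - f y"
  using lin_add[of D f x "cscale (-1) y"] lin_scale[of D f y "-1"] csub_scale[OF lin_sub, of D f y "-1"]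
  by (simp add: cscale_neg1)

lemma lin_prod:
  assumes lA: "lin_op DA A" and lB: "lin_op DB B"
  shows "lin_op (prod_dom DB DA A) (B \<circ> A)"
proof -
  note sA = lin_sub[OF lA] and sB = lin_sub[OF lB]
  have c: "csubspace (prod_dom DB DA A)"
    unfolding csubspace_def prod_dom_def
  proof (intro conjI ballI allI)
    show "0 \<in> {x \<in> DA. A x \<in> DB}" using csub_zero[OF sA] csub_zero[OF sB] lin_zero[OF lA] by simp
    fix x assume x: "x \<in> {x \<in> DA. A x \<in> DB}"
    { fix y assume y: "y \<in> {x \<in> DA. A x \<in> DB}"
      show "x + y \<in> {x \<in> DA. A x \<in> DB}" using x y csub_add[OF sA] csub_add[OF sB] lin_add[OF lA] by simp }
    { fix c show "cscale c x \<in> {x \<in> DA. A x \<in> DB}" using x csub_scale[OF sA] csub_scale[OF sB] lin_scale[OF lA] by simp }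
  qed
  show ?thesis
    unfolding lin_op_def
  proof (intro conjI ballI allI c)
    fix x y assume x: "x \<in> prod_dom DB DA A" and y: "y \<in> prod_dom DB DA A"
    then show "(B \<circ> A) (x + y) = (B \<circ> A) x + (B \<circ> A) y"
      using lin_add[OF lA] lin_add[OF lB] by (simp add: prod_dom_def)
  next
    fix c x assume x: "x \<in> prod_dom DB DA A"
    then show "(B \<circ> A) (cscale c x) = cscale c ((B \<circ> A) x)"
      using lin_scale[OF lA] lin_scale[OF lB] by (simp add: prod_dom_def)
  qed
qed

lemma lin_shift:
  assumes "lin_op D S" "x \<in> D" "y \<in> D"
  shows "S (x + cscale k y) - cscale l (x + cscale k y) = (S x - cscale l x) + cscale k (S y - cscale l y)"
proof -
  have "S (x + cscale k y) = S x + cscale k (S y)"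
    using assms csub_scale[OF lin_sub[OF assms(1)]] by (simp add: lin_add lin_scale)
  moreover have "cscale l (x + cscale k y) = cscale l x + cscale k (cscale l y)"
    by (simp add: cscale_add_right cscale_comm[of l k])
  moreover have "cscale k (S y - cscale l y) = cscale k (S y) - cscale k (cscale l y)"
    by (rule cscale_diff_right)
  ultimately show ?thesis by (simp add: algebra_simps)
qed

lemma lin_shift_diff:
  assumes "lin_op D S" "x \<in> D" "y \<in> D"
  shows "S (x - y) - cscale l (x - y) = (S x - cscale l x) - (S y - cscale l y)"
  using assms by (simp add: lin_diff cscale_diff_right algebra_simps)

lemma res_props:
  assumes "l \<in> resolvent_set D S"
  shows "resolvent D S l z \<in> D" "S (resolvent D S l z) - cscale l (resolvent D S l z) = z"
    "cbounded_linear (resolvent D S l)"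
    "x \<in> D \<Longrightarrow> resolvent D S l (S x - cscale l x) = x"
proof -
  from assms obtain R where bij: "bij_betw (\<lambda>x. S x - cscale l x) D UNIV"
    and R: "cbounded_linear R" "\<And>z. R z \<in> D \<and> S (R z) - cscale l (R z) = z"
    unfolding resolvent_set_def by blast
  have inj: "inj_on (\<lambda>x. S x - cscale l x) D" using bij bij_betw_def by blast
  have eq: "resolvent D S l = R"
  proof
    fix z show "resolvent D S l z = R z"
      unfolding resolvent_def
    proof (rule the_equality)
      show "R z \<in> D \<and> S (R z) - cscale l (R z) = z" using R by blast
      fix x assume "x \<in> D \<and> S x - cscale l x = z"
      then show "x = R z" using R(2)[of z] inj unfolding inj_on_def by metis
    qed
  qed
  show "resolvent D S l z \<in> D" "S (resolvent D S l z) - cscale l (resolvent D S l z) = z"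
    "cbounded_linear (resolvent D S l)" using R eq by auto
  show "x \<in> D \<Longrightarrow> resolvent D S l (S x - cscale l x) = x"
    using R(2)[of "S x - cscale l x"] inj unfolding eq inj_on_def by metis
qed

lemma res_setI:
  assumes lin: "lin_op D S" and R: "cbounded_linear R" "\<And>z. R z \<in> D \<and> S (R z) - cscale l (R z) = z"
    and ker: "\<And>x. x \<in> D \<Longrightarrow> S x - cscale l x = 0 \<Longrightarrow> x = 0"
  shows "l \<in> resolvent_set D S" "resolvent D S l = R"
proof -
  have inj: "inj_on (\<lambda>x. S x - cscale l x) D"
  proof (rule inj_onI)
    fix x y assume xy: "x \<in> D" "y \<in> D" "S x - cscale l x = S y - cscale l y"
    then have "S (x - y) - cscale l (x - y) = 0" using lin_shift_diff[OF lin xy(1,2)] by simp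
    then have "x - y = 0" using ker csub_diff[OF lin_sub[OF lin] xy(1,2)] by blast
    then show "x = y" by simp
  qed
  have "bij_betw (\<lambda>x. S x - cscale l x) D UNIV"
  proof -
    have "z \<in> (\<lambda>x. S x - cscale l x) ` D" for z
    proof -
      have "z = S (R z) - cscale l (R z)" "R z \<in> D" using R(2)[of z] by auto
      then show ?thesis by (rule image_eqI)
    qed
    then show ?thesis unfolding bij_betw_def using inj by blast
  qed
  then show l: "l \<in> resolvent_set D S" unfolding resolvent_set_def using R by blast
  show "resolvent D S l = R"
  proof
    fix z show "resolvent D S l z = R z"
      using res_props(4)[OF l, of "R z"] R(2)[of z] by simp
  qed
qed

lemma cbl_bl: "cbounded_linear f \<Longrightarrow> bounded_linear f" by (simp add: cbounded_linear_def)
lemma cbl_scale: "cbounded_linear f \<Longrightarrow> f (cscale c x) = cscale c (f x)" by (simp add: cbounded_linear_def)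
lemma cbl_add: "cbounded_linear f \<Longrightarrow> f (x + y) = f x + f y"
  by (simp add: cbounded_linear_def linear_add bounded_linear.linear)
lemma cbl_zero: "cbounded_linear f \<Longrightarrow> f 0 = 0"
  by (simp add: cbounded_linear_def linear_0 bounded_linear.linear)
lemma cbl_onorm: "cbounded_linear f \<Longrightarrow> norm (f x) \<le> onorm f * norm x"
  by (simp add: cbounded_linear_def onorm)
lemma cbl_onorm_nn: "cbounded_linear f \<Longrightarrow> 0 \<le> onorm f"
  by (simp add: cbounded_linear_def onorm_pos_le)

lemma cbl_sum: "cbounded_linear f \<Longrightarrow> cbounded_linear g \<Longrightarrow> cbounded_linear (\<lambda>x. f x + g x)"
  unfolding cbounded_linear_def by (auto intro: bounded_linear_add simp: cscale_add_right)
lemma cbl_comp: "cbounded_linear f \<Longrightarrow> cbounded_linear g \<Longrightarrow> cbounded_linear (\<lambda>x. f (g x))"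
  unfolding cbounded_linear_def using bounded_linear_compose by auto
lemma cbl_id: "cbounded_linear (\<lambda>x. x)"
  unfolding cbounded_linear_def by (simp add: bounded_linear_ident)
lemma cbl_cscale: "cbounded_linear (\<lambda>x::'a::complex_normed_vector. cscale k x)"
  unfolding cbounded_linear_def
proof (intro conjI allI)
  show "bounded_linear (cscale k :: 'a \<Rightarrow> 'a)"
    by (rule bounded_linear_intro[where K="cmod k"])
       (simp_all add: cscale_add_right norm_cscale scaleR_cscale cscale_comm)
qed (simp add: cscale_comm)

lemma comp_closed_bounded:
  fixes DA :: "'x::cbanach set" and A :: "'x \<Rightarrow> 'y::cbanach" and R :: "'z::cbanach \<Rightarrow> 'x"
  assumes lin: "lin_op DA A" and cl: "closed_op DA A" and R: "cbounded_linear R" and RD: "\<And>z. R z \<in> DA"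
  shows "cbounded_linear (\<lambda>z. A (R z))"
proof -
  have sc: "A (R (cscale c z)) = cscale c (A (R z))" for c z
    using lin_scale[OF lin RD] cbl_scale[OF R] by simp
  have ad: "A (R (x + y)) = A (R x) + A (R y)" for x y
    using lin_add[OF lin RD RD] cbl_add[OF R] by simp
  have "bounded_linear (\<lambda>z. A (R z))"
  proof (rule closed_graph_thm)
    show "A (R (x + y)) = A (R x) + A (R y)" for x y by (rule ad)
    show "A (R (r *\<^sub>R x)) = r *\<^sub>R A (R x)" for r x
      using sc[of "complex_of_real r" x] by (simp add: cscale_of_real)
    show "closed (range (\<lambda>x. (x, A (R x))))"
      unfolding closed_sequential_limits
    proof (intro allI impI, elim conjE)
      fix s p assume s: "\<forall>n. s n \<in> range (\<lambda>x. (x, A (R x)))" and lim: "s \<longlonglongrightarrow> p"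
      obtain z y where p: "p = (z, y)" by (cases p)
      have "(fst \<circ> s) \<longlonglongrightarrow> z" using tendsto_fst[OF lim] p by (simp add: comp_def)
      then have "(\<lambda>n. R (fst (s n))) \<longlonglongrightarrow> R z"
        using bounded_linear.tendsto[OF cbl_bl[OF R]] by (simp add: comp_def)
      moreover have "(\<lambda>n. snd (s n)) \<longlonglongrightarrow> y" using tendsto_snd[OF lim] p by simp
      ultimately have TT: "(\<lambda>n. (R (fst (s n)), snd (s n))) \<longlonglongrightarrow> (R z, y)" by (rule tendsto_Pair)
      have GG: "\<forall>n. (R (fst (s n)), snd (s n)) \<in> graph DA A"
      proof
        fix n obtain w where "s n = (w, A (R w))" using s by blast
        then show "(R (fst (s n)), snd (s n)) \<in> graph DA A" using RD[of w] unfolding graph_def by auto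
      qed
      have C: "\<And>x l. (\<forall>n. x n \<in> graph DA A) \<Longrightarrow> x \<longlonglongrightarrow> l \<Longrightarrow> l \<in> graph DA A"
        using cl unfolding closed_op_def closed_sequential_limits by blast
      have "(R z, y) \<in> graph DA A" by (rule C[OF GG TT])
      then have "y = A (R z)" unfolding graph_def by auto
      then show "p \<in> range (\<lambda>x. (x, A (R x)))" using p by auto
    qed
  qed
  then show ?thesis unfolding cbounded_linear_def using sc by simp
qed

lemma key:
  fixes DA :: "'x::cbanach set" and A :: "'x \<Rightarrow> 'y::cbanach" and DB :: "'y set" and B :: "'y \<Rightarrow> 'x"
  assumes lA: "lin_op DA A" and cA: "closed_op DA A" and lB: "lin_op DB B" and cB: "closed_op DB B"
    and m: "m \<in> resolvent_set (prod_dom DB DA A) (B \<circ> A)"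
    and l: "l \<in> resolvent_set (prod_dom DA DB B) (A \<circ> B)" and l0: "l \<noteq> 0"
  shows "l \<in> resolvent_set (prod_dom DB DA A) (B \<circ> A) \<and> resolvent (prod_dom DB DA A) (B \<circ> A) l =
    (\<lambda>x. cscale (inverse l) (cscale m (resolvent (prod_dom DB DA A) (B \<circ> A) m x)
       + cscale (l - m) (B (resolvent (prod_dom DA DB B) (A \<circ> B) l (A (resolvent (prod_dom DB DA A) (B \<circ> A) m x))))))"
proof -
  define D1 where "D1 = prod_dom DB DA A"
  define D2 where "D2 = prod_dom DA DB B"
  define S where "S = resolvent D1 (B \<circ> A) m"
  define R where "R = resolvent D2 (A \<circ> B) l"
  note m' = m[folded D1_def] and l' = l[folded D2_def]
  have l1: "lin_op D1 (B \<circ> A)" unfolding D1_def by (rule lin_prod[OF lA lB])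
  have l2: "lin_op D2 (A \<circ> B)" unfolding D2_def by (rule lin_prod[OF lB lA])
  have sA: "csubspace DA" and sB: "csubspace DB" using lA lB by (simp_all add: lin_sub)
  have SD: "S x \<in> DA" "A (S x) \<in> DB" "B (A (S x)) - cscale m (S x) = x" for x
    using res_props(1,2)[OF m', of x] unfolding S_def D1_def prod_dom_def by auto
  have RD: "R y \<in> DB" "B (R y) \<in> DA" "A (B (R y)) - cscale l (R y) = y" for y
    using res_props(1,2)[OF l', of y] unfolding R_def D2_def prod_dom_def by auto
  have Sb: "cbounded_linear S" unfolding S_def by (rule res_props(3)[OF m'])
  have Rb: "cbounded_linear R" unfolding R_def by (rule res_props(3)[OF l'])
  have ASb: "cbounded_linear (\<lambda>x. A (S x))" by (rule comp_closed_bounded[OF lA cA Sb SD(1)])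
  have BRb: "cbounded_linear (\<lambda>y. B (R y))" by (rule comp_closed_bounded[OF lB cB Rb RD(1)])
  define T where "T x = cscale (inverse l) (cscale m (S x) + cscale (l - m) (B (R (A (S x)))))" for x
  have Tb: "cbounded_linear T"
  proof -
    have "cbounded_linear (\<lambda>x. B (R (A (S x))))" using cbl_comp[OF BRb ASb] by simp
    from cbl_comp[OF cbl_cscale this, of "l - m"]
    have 1: "cbounded_linear (\<lambda>x. cscale (l - m) (B (R (A (S x)))))" by simp
    from cbl_comp[OF cbl_cscale Sb, of m]
    have 2: "cbounded_linear (\<lambda>x. cscale m (S x))" by simp
    from cbl_comp[OF cbl_cscale cbl_sum[OF 2 1], of "inverse l"]
    show ?thesis unfolding T_def[abs_def] by simp
  qed
  have Tprop: "T x \<in> D1 \<and> (B \<circ> A) (T x) - cscale l (T x) = x" for x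
  proof -
    define u where "u = S x"
    define v where "v = R (A u)"
    define z where "z = B v - u"
    have u: "u \<in> DA" "A u \<in> DB" "B (A u) - cscale m u = x" using SD u_def by auto
    have v: "v \<in> DB" "B v \<in> DA" "A (B v) - cscale l v = A u" using RD v_def by auto
    have zA: "z \<in> DA" using csub_diff[OF sA v(2) u(1)] z_def by simp
    have ABv: "A (B v) = A u + cscale l v" by (metis v(3) diff_add_cancel)
    have Az: "A z = cscale l v" unfolding z_def lin_diff[OF lA v(2) u(1)] ABv by simp
    have zD: "z \<in> D1" using zA Az csub_scale[OF sB v(1)] by (simp add: D1_def prod_dom_def)
    have uD: "u \<in> D1" using u by (simp add: D1_def prod_dom_def)
    have BAz: "B (A z) = cscale l (B v)" by (simp add: Az lin_scale[OF lB v(1)])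
    have Bv: "B v = z + u" by (simp add: z_def)
    have BAu: "B (A u) = x + cscale m u" by (metis u(3) diff_add_cancel)
    define k where "k = (l - m) / l"
    have Tx: "T x = u + cscale k z"
    proof -
      have "T x = cscale (inverse l) (cscale m u + cscale (l - m) (z + u))"
        by (simp add: T_def u_def[symmetric] v_def[symmetric] Bv)
      also have "cscale m u + cscale (l - m) (z + u) = (cscale m u + cscale (l - m) u) + cscale (l - m) z"
        by (simp add: cscale_add_right algebra_simps)
      also have "cscale m u + cscale (l - m) u = cscale l u"
        using cscale_add_left[of m "l - m" u, symmetric] by simp
      also have "cscale (inverse l) (cscale l u + cscale (l - m) z) = u + cscale k z"
        using l0 by (simp add: cscale_add_right cscale_inv cscale_cscale k_def field_simps cscale_one)
      finally show ?thesis .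
    qed
    have "(B \<circ> A) (T x) - cscale l (T x) = ((B \<circ> A) u - cscale l u) + cscale k ((B \<circ> A) z - cscale l z)"
      unfolding Tx by (rule lin_shift[OF l1 uD zD])
    also have "(B \<circ> A) u - cscale l u = x + cscale m u - cscale l u" by (simp add: BAu)
    also have "(B \<circ> A) z - cscale l z = cscale l u"
      using BAz by (simp add: Bv cscale_add_right)
    also have "cscale k (cscale l u) = cscale (l - m) u"
      using l0 by (simp add: cscale_cscale k_def)
    also have "x + cscale m u - cscale l u + cscale (l - m) u = x"
      by (simp add: cscale_diff_left)
    finally have "(B \<circ> A) (T x) - cscale l (T x) = x" .
    moreover have "T x \<in> D1" unfolding Tx by (rule csub_add[OF lin_sub[OF l1] uD csub_scale[OF lin_sub[OF l1] zD]])
    ultimately show ?thesis by simp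
  qed
  have ker: "x = 0" if x: "x \<in> D1" and e: "(B \<circ> A) x - cscale l x = 0" for x
  proof -
    have xA: "x \<in> DA" "A x \<in> DB" "B (A x) = cscale l x" using x e by (auto simp: D1_def prod_dom_def)
    then have AxD: "A x \<in> D2" using csub_scale[OF sA] by (simp add: D2_def prod_dom_def)
    have "(A \<circ> B) (A x) - cscale l (A x) = 0" using xA lin_scale[OF lA xA(1)] by simp
    then have "A x = R 0" using res_props(4)[OF l' AxD] R_def by simp
    then have "A x = 0" using cbl_zero[OF Rb] by simp
    then have "cscale l x = 0" using xA lin_zero[OF lB] by simp
    then show "x = 0" using cscale_inv[OF l0, of x] by simp
  qed
  have r1: "l \<in> resolvent_set D1 (B \<circ> A)" and r2: "resolvent D1 (B \<circ> A) l = T"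
    using res_setI[OF l1 Tb _ ker] Tprop by blast+
  have "T = (\<lambda>x. cscale (inverse l) (cscale m (S x) + cscale (l - m) (B (R (A (S x))))))"
    by (rule ext) (simp add: T_def)
  then show ?thesis using r1 r2 unfolding D1_def D2_def S_def R_def by simp
qed

lemma closure_part:
  fixes DA :: "'x::cbanach set" and A :: "'x \<Rightarrow> 'y::cbanach" and DB :: "'y set" and B :: "'y \<Rightarrow> 'x"
  assumes lA: "lin_op DA A" and lB: "lin_op DB B" and dA: "densely_defined DA"
    and l: "l \<in> resolvent_set (prod_dom DA DB B) (A \<circ> B)"
    and l1: "l \<in> resolvent_set (prod_dom DB DA A) (B \<circ> A)" and l0: "l \<noteq> 0"
  shows "closable DA (\<lambda>x. B (resolvent (prod_dom DA DB B) (A \<circ> B) l (A x)))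
         \<and> cl_dom DA (\<lambda>x. B (resolvent (prod_dom DA DB B) (A \<circ> B) l (A x))) = UNIV
         \<and> (\<forall>x. resolvent (prod_dom DB DA A) (B \<circ> A) l x =
                cscale (inverse l) (cl_fun DA (\<lambda>x. B (resolvent (prod_dom DA DB B) (A \<circ> B) l (A x))) x - x))"
proof -
  define D1 where "D1 = prod_dom DB DA A"
  define D2 where "D2 = prod_dom DA DB B"
  define S where "S = resolvent D1 (B \<circ> A) l"
  define R where "R = resolvent D2 (A \<circ> B) l"
  define f where "f x = B (R (A x))" for x
  define g where "g x = x + cscale l (S x)" for x
  note l1' = l1[folded D1_def] and l' = l[folded D2_def]
  have sA: "csubspace DA" and sB: "csubspace DB" using lA lB by (simp_all add: lin_sub)
  have RD: "R y \<in> DB" "B (R y) \<in> DA" "A (B (R y)) - cscale l (R y) = y" for y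
    using res_props(1,2)[OF l', of y] unfolding R_def D2_def prod_dom_def by auto
  have Sb: "cbounded_linear S" unfolding S_def by (rule res_props(3)[OF l1'])
  have fg: "f x = g x" if x: "x \<in> DA" for x
  proof -
    define v where "v = R (A x)"
    define z where "z = B v - x"
    have v: "v \<in> DB" "B v \<in> DA" "A (B v) - cscale l v = A x" using RD v_def by auto
    have zA: "z \<in> DA" using csub_diff[OF sA v(2) x] z_def by simp
    have ABv: "A (B v) = A x + cscale l v" by (metis v(3) diff_add_cancel)
    have Az: "A z = cscale l v" unfolding z_def lin_diff[OF lA v(2) x] ABv by simp
    have zD: "z \<in> D1" using zA Az csub_scale[OF sB v(1)] by (simp add: D1_def prod_dom_def)
    have "(B \<circ> A) z - cscale l z = cscale l (B v) - cscale l z" by (simp add: Az lin_scale[OF lB v(1)])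
    also have "\<dots> = cscale l x" by (simp add: z_def flip: cscale_diff_right)
    finally have "z = S (cscale l x)" using res_props(4)[OF l1' zD] S_def by simp
    then have "z = cscale l (S x)" using cbl_scale[OF Sb] by simp
    then show ?thesis by (simp add: f_def g_def v_def[symmetric] z_def algebra_simps)
  qed
  have gb: "cbounded_linear g" unfolding g_def[abs_def] using cbl_sum[OF cbl_id cbl_comp[OF cbl_cscale Sb]] by simp
  have gc: "continuous_on UNIV g" using cbl_bl[OF gb] by (simp add: linear_continuous_on)
  have gr: "graph DA f = (\<lambda>x. (x, g x)) ` DA" unfolding graph_def using fg by auto
  have cl: "closure (graph DA f) = range (\<lambda>x. (x, g x))"
  proof
    show "closure (graph DA f) \<subseteq> range (\<lambda>x. (x, g x))"
      by (rule closure_minimal) (auto simp: gr intro: continuous_closed_graph[OF closed_UNIV gc])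
    have "(\<lambda>x. (x, g x)) ` closure DA \<subseteq> closure (graph DA f)"
      by (rule image_closure_subset) (auto simp: gr intro!: continuous_on_Pair continuous_on_id
          continuous_on_subset[OF gc] closure_subset[THEN subsetD])
    then show "range (\<lambda>x. (x, g x)) \<subseteq> closure (graph DA f)"
      using dA by (simp add: densely_defined_def)
  qed
  have f_eq: "(\<lambda>x. B (resolvent (prod_dom DA DB B) (A \<circ> B) l (A x))) = f"
    by (simp add: f_def[abs_def] R_def D2_def)
  have "closable DA f" unfolding closable_def cl is_graph_def by auto
  moreover have "cl_dom DA f = UNIV" unfolding cl_dom_def cl by force
  moreover have "cl_fun DA f x = g x" for x
    unfolding cl_fun_def cl by (rule the_equality) auto
  moreover have "S x = cscale (inverse l) (g x - x)" for x
    using l0 by (simp add: g_def cscale_inv)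
  ultimately show ?thesis unfolding f_eq by (simp add: S_def D1_def)
qed

lemma res_ident:
  assumes lin: "lin_op D S" and l0: "l0 \<in> resolvent_set D S" and l: "l \<in> resolvent_set D S"
  shows "resolvent D S l y = resolvent D S l0 (y + cscale (l - l0) (resolvent D S l y))"
proof -
  define w where "w = resolvent D S l y"
  have w: "w \<in> D" "S w - cscale l w = y" using res_props(1,2)[OF l] w_def by auto
  have "S w - cscale l0 w = y + cscale (l - l0) w"
    using w(2) by (simp add: cscale_diff_left algebra_simps)
  then show ?thesis using res_props(4)[OF l0 w(1)] w_def by simp
qed

lemma scal1:
  fixes a b M :: real
  assumes "0 \<le> a" "0 \<le> b" "1 \<le> M"
  shows "1 + (a + b) * M \<le> (1 + b) * (2 + a) * M"
proof -
  have h: "0 \<le> M * (a * b)" "0 \<le> M * b" using assms by simp_all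
  have e1: "(1 + b) * (2 + a) * M = M * b + (M * (a * b) + M * 2) + M * a + M * b" by (simp add: algebra_simps)
  have e2: "1 + (a + b) * M = 1 + M * a + M * b" by (simp add: algebra_simps)
  show ?thesis unfolding e1 e2 using assms h by linarith
qed

lemma res_bound:
  assumes lin: "lin_op D S" and l0: "l0 \<in> resolvent_set D S" and l: "l \<in> resolvent_set D S"
    and Q: "\<And>y. Q (resolvent D S l0 y) = P y" and P: "cbounded_linear P"
  shows "norm (Q (resolvent D S l y)) \<le> onorm P * (1 + cmod l0) * (2 + cmod l) * max 1 (onorm (resolvent D S l)) * norm y"
proof -
  define M where "M = max 1 (onorm (resolvent D S l))"
  define w where "w = resolvent D S l y"
  have nw: "norm w \<le> M * norm y"
    using cbl_onorm[OF res_props(3)[OF l], of y] unfolding w_def M_def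
    by (meson max.cobounded2 mult_right_mono norm_ge_zero order_trans)
  have "Q w = P (y + cscale (l - l0) w)" using res_ident[OF lin l0 l, of y] Q w_def by metis
  then have "norm (Q w) \<le> onorm P * norm (y + cscale (l - l0) w)" using cbl_onorm[OF P] by simp
  also have "\<dots> \<le> onorm P * (norm y + cmod (l - l0) * (M * norm y))"
  proof (rule mult_left_mono[OF _ cbl_onorm_nn[OF P]])
    have "norm (y + cscale (l - l0) w) \<le> norm y + cmod (l - l0) * norm w"
      using norm_triangle_ineq[of y "cscale (l - l0) w"] by (simp add: norm_cscale)
    also have "\<dots> \<le> norm y + cmod (l - l0) * (M * norm y)" using nw by (simp add: mult_left_mono)
    finally show "norm (y + cscale (l - l0) w) \<le> norm y + cmod (l - l0) * (M * norm y)" .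
  qed
  also have "\<dots> = onorm P * (1 + cmod (l - l0) * M) * norm y" by (simp add: algebra_simps)
  also have "\<dots> \<le> onorm P * ((1 + cmod l0) * (2 + cmod l) * M) * norm y"
  proof (intro mult_right_mono mult_left_mono cbl_onorm_nn[OF P] norm_ge_zero)
    have M1: "1 \<le> M" by (simp add: M_def)
    have "1 + cmod (l - l0) * M \<le> 1 + (cmod l + cmod l0) * M"
      using M1 norm_triangle_ineq4[of l l0] by (simp add: mult_right_mono)
    also have "\<dots> \<le> (1 + cmod l0) * (2 + cmod l) * M" by (rule scal1) (use M1 in auto)
    finally show "1 + cmod (l - l0) * M \<le> (1 + cmod l0) * (2 + cmod l) * M" .
  qed
  finally show ?thesis unfolding w_def M_def by (simp add: mult.assoc)
qed

lemma scal2: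
  fixes a d K K1 K2 C M1 M2 P1 P2 n X Z L :: real
  assumes a: "0 \<le> a" and d: "0 \<le> d" and KC: "K \<le> C" and C1: "1 \<le> C" and M1: "1 \<le> M1" and M2: "1 \<le> M2"
    and P1: "0 \<le> P1" and P2: "0 \<le> P2" and n: "0 \<le> n" and X: "X \<le> M2 * n"
    and Z: "Z \<le> K1 * P1 * M1 * (K2 * P2 * M2 * n)" and K: "K = K1 * K2" and L: "0 < L"
  shows "(1 / L) * (a * X + d * Z) \<le> C * M1 * M2 / L * (a + d * P1 * P2) * n"
proof -
  have 1: "a * X \<le> a * (M2 * n)" by (rule mult_left_mono[OF X a])
  have CM: "1 \<le> C * M1" using C1 M1 by (metis mult_mono' mult_1 zero_le_one)
  have "M2 * n * 1 \<le> M2 * n * (C * M1)" by (rule mult_left_mono[OF CM]) (use M2 n in simp)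
  then have 2: "a * (M2 * n) \<le> a * (C * M1 * M2 * n)" using a by (intro mult_left_mono) (simp_all add: algebra_simps)
  have 3: "d * Z \<le> d * (K1 * P1 * M1 * (K2 * P2 * M2 * n))" by (rule mult_left_mono[OF Z d])
  have 4: "K1 * P1 * M1 * (K2 * P2 * M2 * n) = K * (P1 * P2 * M1 * M2 * n)" by (simp add: K algebra_simps)
  have nn: "0 \<le> P1 * P2 * M1 * M2 * n" using P1 P2 M1 M2 n by simp
  have 5: "K * (P1 * P2 * M1 * M2 * n) \<le> C * (P1 * P2 * M1 * M2 * n)" by (rule mult_right_mono[OF KC nn])
  have 6: "d * (K * (P1 * P2 * M1 * M2 * n)) \<le> d * (C * (P1 * P2 * M1 * M2 * n))" by (rule mult_left_mono[OF 5 d])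
  have h3: "d * Z \<le> d * (K * (P1 * P2 * M1 * M2 * n))" using 3 4 by simp
  have "a * X + d * Z \<le> a * (C * M1 * M2 * n) + d * (C * (P1 * P2 * M1 * M2 * n))"
    using 1 2 h3 6 by linarith
  also have "\<dots> = C * M1 * M2 * (a + d * P1 * P2) * n" by (simp add: algebra_simps)
  finally have "(1 / L) * (a * X + d * Z) \<le> (1 / L) * (C * M1 * M2 * (a + d * P1 * P2) * n)"
    using L by (intro mult_left_mono) simp_all
  also have "(1 / L) * (C * M1 * M2 * (a + d * P1 * P2) * n) = C * M1 * M2 / L * (a + d * P1 * P2) * n"
    by simp
  finally show ?thesis .
qed

theorem theorem1p3:
  fixes DA :: "'x::cbanach set" and A :: "'x \<Rightarrow> 'y::cbanach"
    and DB :: "'y set" and B :: "'y \<Rightarrow> 'x"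
  assumes A_lin: "lin_op DA A" and A_closed: "closed_op DA A" and A_dense: "densely_defined DA"
    and B_lin: "lin_op DB B" and B_closed: "closed_op DB B" and B_dense: "densely_defined DB"
    and AB_res: "resolvent_set (prod_dom DA DB B) (A \<circ> B) \<noteq> {}"
    and BA_res: "resolvent_set (prod_dom DB DA A) (B \<circ> A) \<noteq> {}"
  shows "(spectrum_op (prod_dom DA DB B) (A \<circ> B) - {0} = spectrum_op (prod_dom DB DA A) (B \<circ> A) - {0})
    \<and> (\<forall>l \<in> resolvent_set (prod_dom DA DB B) (A \<circ> B) - {0}.
           closable DA (\<lambda>x. B (resolvent (prod_dom DA DB B) (A \<circ> B) l (A x)))
         \<and> cl_dom DA (\<lambda>x. B (resolvent (prod_dom DA DB B) (A \<circ> B) l (A x))) = UNIV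
         \<and> (\<forall>x. resolvent (prod_dom DB DA A) (B \<circ> A) l x =
                cscale (inverse l) (cl_fun DA (\<lambda>x. B (resolvent (prod_dom DA DB B) (A \<circ> B) l (A x))) x - x)))
    \<and> (\<forall>l \<in> resolvent_set (prod_dom DA DB B) (A \<circ> B) - {0}. \<forall>m \<in> resolvent_set (prod_dom DB DA A) (B \<circ> A).
           \<forall>x. resolvent (prod_dom DB DA A) (B \<circ> A) l x =
             cscale (inverse l)
               (cscale m (resolvent (prod_dom DB DA A) (B \<circ> A) m x)
                + cscale (l - m) (B (resolvent (prod_dom DA DB B) (A \<circ> B) l
                                      (A (resolvent (prod_dom DB DA A) (B \<circ> A) m x))))))
    \<and> (\<exists>C>0. \<forall>l \<in> resolvent_set (prod_dom DB DA A) (B \<circ> A). \<forall>m \<in> resolvent_set (prod_dom DB DA A) (B \<circ> A).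
           l \<noteq> 0 \<longrightarrow>
           onorm (resolvent (prod_dom DB DA A) (B \<circ> A) l)
             \<le> C * max 1 (onorm (resolvent (prod_dom DA DB B) (A \<circ> B) l))
                 * max 1 (onorm (resolvent (prod_dom DB DA A) (B \<circ> A) m)) / cmod l
                 * (cmod m + cmod (l - m) * (2 + cmod l) * (2 + cmod m)))"
proof -
  define D1 where "D1 = prod_dom DB DA A"
  define D2 where "D2 = prod_dom DA DB B"
  note defs = D1_def[symmetric] D2_def[symmetric]
  have l1: "lin_op D1 (B \<circ> A)" unfolding D1_def by (rule lin_prod[OF A_lin B_lin])
  have l2: "lin_op D2 (A \<circ> B)" unfolding D2_def by (rule lin_prod[OF B_lin A_lin])
  from AB_res obtain l0 where l0: "l0 \<in> resolvent_set D2 (A \<circ> B)" unfolding D2_def by blast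
  from BA_res obtain m0 where m0: "m0 \<in> resolvent_set D1 (B \<circ> A)" unfolding D1_def by blast
  have AB_BA: "l \<in> resolvent_set D1 (B \<circ> A)" if "l \<in> resolvent_set D2 (A \<circ> B)" "l \<noteq> 0" for l
    using key[OF A_lin A_closed B_lin B_closed m0[unfolded D1_def] that[unfolded D2_def]] by (simp add: defs)
  have BA_AB: "l \<in> resolvent_set D2 (A \<circ> B)" if "l \<in> resolvent_set D1 (B \<circ> A)" "l \<noteq> 0" for l
    using key[OF B_lin B_closed A_lin A_closed l0[unfolded D2_def] that[unfolded D1_def]] by (simp add: defs)
  have c1: "spectrum_op D2 (A \<circ> B) - {0} = spectrum_op D1 (B \<circ> A) - {0}"
    unfolding spectrum_op_def using AB_BA BA_AB by blast
  have c2: "\<forall>l \<in> resolvent_set D2 (A \<circ> B) - {0}.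
           closable DA (\<lambda>x. B (resolvent D2 (A \<circ> B) l (A x)))
         \<and> cl_dom DA (\<lambda>x. B (resolvent D2 (A \<circ> B) l (A x))) = UNIV
         \<and> (\<forall>x. resolvent D1 (B \<circ> A) l x =
                cscale (inverse l) (cl_fun DA (\<lambda>x. B (resolvent D2 (A \<circ> B) l (A x))) x - x))"
  proof
    fix l assume l: "l \<in> resolvent_set D2 (A \<circ> B) - {0}"
    then have "l \<in> resolvent_set D1 (B \<circ> A)" using AB_BA by blast
    then show "closable DA (\<lambda>x. B (resolvent D2 (A \<circ> B) l (A x)))
         \<and> cl_dom DA (\<lambda>x. B (resolvent D2 (A \<circ> B) l (A x))) = UNIV
         \<and> (\<forall>x. resolvent D1 (B \<circ> A) l x =
                cscale (inverse l) (cl_fun DA (\<lambda>x. B (resolvent D2 (A \<circ> B) l (A x))) x - x))"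
      using closure_part[OF A_lin B_lin A_dense, of l] l unfolding D1_def D2_def by blast
  qed
  have c3: "\<forall>l \<in> resolvent_set D2 (A \<circ> B) - {0}. \<forall>m \<in> resolvent_set D1 (B \<circ> A).
           \<forall>x. resolvent D1 (B \<circ> A) l x =
             cscale (inverse l)
               (cscale m (resolvent D1 (B \<circ> A) m x)
                + cscale (l - m) (B (resolvent D2 (A \<circ> B) l (A (resolvent D1 (B \<circ> A) m x)))))"
  proof (intro ballI allI)
    fix l m x assume l: "l \<in> resolvent_set D2 (A \<circ> B) - {0}" and m: "m \<in> resolvent_set D1 (B \<circ> A)"
    have "resolvent D1 (B \<circ> A) l = (\<lambda>x. cscale (inverse l) (cscale m (resolvent D1 (B \<circ> A) m x)
       + cscale (l - m) (B (resolvent D2 (A \<circ> B) l (A (resolvent D1 (B \<circ> A) m x))))))"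
      using key[OF A_lin A_closed B_lin B_closed m[unfolded D1_def], of l] l unfolding D1_def D2_def by blast
    then show "resolvent D1 (B \<circ> A) l x = cscale (inverse l) (cscale m (resolvent D1 (B \<circ> A) m x)
       + cscale (l - m) (B (resolvent D2 (A \<circ> B) l (A (resolvent D1 (B \<circ> A) m x)))))" by simp
  qed
  define P1 where "P1 = (\<lambda>y. B (resolvent D2 (A \<circ> B) l0 y))"
  define P2 where "P2 = (\<lambda>x. A (resolvent D1 (B \<circ> A) m0 x))"
  have P1b: "cbounded_linear P1" unfolding P1_def
    by (rule comp_closed_bounded[OF B_lin B_closed res_props(3)[OF l0]])
       (use res_props(1)[OF l0] in \<open>auto simp: D2_def prod_dom_def\<close>)
  have P2b: "cbounded_linear P2" unfolding P2_def
    by (rule comp_closed_bounded[OF A_lin A_closed res_props(3)[OF m0]])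
       (use res_props(1)[OF m0] in \<open>auto simp: D1_def prod_dom_def\<close>)
  define K1 where "K1 = onorm P1 * (1 + cmod l0)"
  define K2 where "K2 = onorm P2 * (1 + cmod m0)"
  define C where "C = max 1 (K1 * K2)"
  have c4: "\<forall>l \<in> resolvent_set D1 (B \<circ> A). \<forall>m \<in> resolvent_set D1 (B \<circ> A).
           l \<noteq> 0 \<longrightarrow>
           onorm (resolvent D1 (B \<circ> A) l)
             \<le> C * max 1 (onorm (resolvent D2 (A \<circ> B) l))
                 * max 1 (onorm (resolvent D1 (B \<circ> A) m)) / cmod l
                 * (cmod m + cmod (l - m) * (2 + cmod l) * (2 + cmod m))"
  proof (intro ballI impI)
    fix l m assume l: "l \<in> resolvent_set D1 (B \<circ> A)" and m: "m \<in> resolvent_set D1 (B \<circ> A)" and ln: "l \<noteq> 0"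
    have lAB: "l \<in> resolvent_set D2 (A \<circ> B)" using BA_AB l ln by blast
    define M1 where "M1 = max 1 (onorm (resolvent D2 (A \<circ> B) l))"
    define M2 where "M2 = max 1 (onorm (resolvent D1 (B \<circ> A) m))"
    have RB: "norm (B (resolvent D2 (A \<circ> B) l w)) \<le> K1 * (2 + cmod l) * M1 * norm w" for w
      using res_bound[OF l2 l0 lAB, of B P1 w] P1b unfolding K1_def M1_def P1_def by simp
    have AS: "norm (A (resolvent D1 (B \<circ> A) m x)) \<le> K2 * (2 + cmod m) * M2 * norm x" for x
      using res_bound[OF l1 m0 m, of A P2 x] P2b unfolding K2_def M2_def P2_def by simp
    have SM: "norm (resolvent D1 (B \<circ> A) m x) \<le> M2 * norm x" for x
      using cbl_onorm[OF res_props(3)[OF m], of x] unfolding M2_def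
      by (meson max.cobounded2 mult_right_mono norm_ge_zero order_trans)
    have form: "resolvent D1 (B \<circ> A) l x = cscale (inverse l) (cscale m (resolvent D1 (B \<circ> A) m x)
       + cscale (l - m) (B (resolvent D2 (A \<circ> B) l (A (resolvent D1 (B \<circ> A) m x)))))" for x
      using c3 lAB ln m by blast
    show "onorm (resolvent D1 (B \<circ> A) l) \<le> C * M1 * M2 / cmod l * (cmod m + cmod (l - m) * (2 + cmod l) * (2 + cmod m))"
    proof (rule onorm_bound)
      show "0 \<le> C * M1 * M2 / cmod l * (cmod m + cmod (l - m) * (2 + cmod l) * (2 + cmod m))"
        by (simp add: C_def M1_def M2_def)
      fix x
      define X where "X = norm (resolvent D1 (B \<circ> A) m x)"
      define Z where "Z = norm (B (resolvent D2 (A \<circ> B) l (A (resolvent D1 (B \<circ> A) m x))))"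
      have "norm (resolvent D1 (B \<circ> A) l x) = (1 / cmod l) * norm (cscale m (resolvent D1 (B \<circ> A) m x)
       + cscale (l - m) (B (resolvent D2 (A \<circ> B) l (A (resolvent D1 (B \<circ> A) m x)))))"
        unfolding form by (simp add: norm_cscale norm_inverse divide_inverse)
      also have "\<dots> \<le> (1 / cmod l) * (cmod m * X + cmod (l - m) * Z)"
        using norm_triangle_ineq[of "cscale m (resolvent D1 (B \<circ> A) m x)"
            "cscale (l - m) (B (resolvent D2 (A \<circ> B) l (A (resolvent D1 (B \<circ> A) m x))))"]
        by (intro mult_left_mono) (simp_all add: norm_cscale X_def Z_def)
      also have "\<dots> \<le> C * M1 * M2 / cmod l * (cmod m + cmod (l - m) * (2 + cmod l) * (2 + cmod m)) * norm x"
      proof -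
        have hX: "X \<le> M2 * norm x" using SM X_def by simp
        have "Z \<le> K1 * (2 + cmod l) * M1 * norm (A (resolvent D1 (B \<circ> A) m x))" using RB Z_def by simp
        also have "\<dots> \<le> K1 * (2 + cmod l) * M1 * (K2 * (2 + cmod m) * M2 * norm x)"
          by (rule mult_left_mono[OF AS]) (simp add: K1_def M1_def cbl_onorm_nn[OF P1b])
        finally have hZ: "Z \<le> K1 * (2 + cmod l) * M1 * (K2 * (2 + cmod m) * M2 * norm x)" .
        show ?thesis
          by (rule scal2[OF _ _ _ _ _ _ _ _ _ hX hZ refl]) (use ln in \<open>simp_all add: C_def M1_def M2_def\<close>)
      qed
      finally show "norm (resolvent D1 (B \<circ> A) l x) \<le> C * M1 * M2 / cmod l * (cmod m + cmod (l - m) * (2 + cmod l) * (2 + cmod m)) * norm x" .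
    qed
  qed
  have "C > 0" by (simp add: C_def)
  then have c4': "\<exists>C>0. \<forall>l \<in> resolvent_set D1 (B \<circ> A). \<forall>m \<in> resolvent_set D1 (B \<circ> A).
           l \<noteq> 0 \<longrightarrow>
           onorm (resolvent D1 (B \<circ> A) l)
             \<le> C * max 1 (onorm (resolvent D2 (A \<circ> B) l))
                 * max 1 (onorm (resolvent D1 (B \<circ> A) m)) / cmod l
                 * (cmod m + cmod (l - m) * (2 + cmod l) * (2 + cmod m))"
    using c4 by blast
  show ?thesis using c1 c2 c3 c4' unfolding D1_def D2_def by blast
qed

end
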